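(* Fix $x,t>0$ and let $\tau_1$ be a minimizer of $\tau\mapsto G(\tau,x,t)$ on $[0,\infty)$. Let $(\bar x,\bar t)\ne(x,t)$ be any point on the line segment joining $(x,t)$ and $(0,\tau_1)$. Then the minimizer of $\tau\mapsto G(\tau,\bar x,\bar t)$ on $[0,\infty)$ is unique and equals $\tau_1$.
   Context: Standing assumptions: $u_b:[0,\infty)\to(0,\infty)$ bounded measurable and positive; $\rho_b:[0,\infty)\to(0,\infty)$ positive locally bounded measurable. For $x,t,\tau\ge0$: $G(\tau,x,t)=\int_0^\tau[x-u_b(\eta)(t-\eta)]\rho_b(\eta)u_b(\eta)\,d\eta$. *)

theory Defs
  imports "HOL-Analysis.Analysis"
begin

definition G :: "(real \<Rightarrow> real) \<Rightarrow> (real \<Rightarrow> real) \<Rightarrow> real \<Rightarrow> real \<Rightarrow> real \<Rightarrow> real" where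
  "G u_b rho_b \<tau> x t =
     (LINT \<eta>:{0..\<tau>}|lborel. (x - u_b \<eta> * (t - \<eta>)) * rho_b \<eta> * u_b \<eta>)"

end

theory Submission
  imports Defs
begin

lemma pos_lemma:
  fixes g :: "real \<Rightarrow> real" and a b :: real
  assumes ab: "a < b" and int: "set_integrable lborel {a<..b} g"
    and nn: "\<forall>\<eta>\<in>{a<..b}. g \<eta> \<ge> 0" and pos: "\<forall>\<eta>\<in>{a<..<b}. g \<eta> > 0"
  shows "0 < (LINT \<eta>:{a<..b}|lborel. g \<eta>)"
proof -
  let ?f = "\<lambda>\<eta>. indicator {a<..b} \<eta> *\<^sub>R g \<eta>"
  have fi: "integrable lborel ?f" using int by (simp add: set_integrable_def)
  have fnn: "AE x in lborel. 0 \<le> ?f x"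
    using nn by (auto simp: indicator_def)
  have ge: "0 \<le> integral\<^sup>L lborel ?f" by (rule integral_nonneg_AE[OF fnn])
  have "integral\<^sup>L lborel ?f \<noteq> 0"
  proof
    assume "integral\<^sup>L lborel ?f = 0"
    then have "AE x in lborel. ?f x = 0"
      using integral_nonneg_eq_0_iff_AE[OF fi fnn] by simp
    then have "AE x in lborel. x \<notin> {a<..<b}"
      by eventually_elim (use pos in \<open>fastforce simp: indicator_def\<close>)
    then have "emeasure lborel {x. a < x \<and> x < b} = 0"
      by (subst (asm) AE_iff_measurable[OF _ refl]) auto
    moreover have "{x. a < x \<and> x < b} = {a<..<b}" by auto
    ultimately have "emeasure lborel {a<..<b} = 0" by simp
    then show False using ab by simp
  qed
  with ge show ?thesis by (simp add: set_lebesgue_integral_def)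
qed

theorem lemma2p4:
  fixes u_b rho_b :: "real \<Rightarrow> real" and x t \<tau>1 xb tb :: real
  assumes u_meas: "set_borel_measurable borel {0..} u_b"
    and u_bdd: "\<exists>B. \<forall>\<eta>\<ge>0. u_b \<eta> \<le> B"
    and u_pos: "\<forall>\<eta>\<ge>0. u_b \<eta> > 0"
    and rho_meas: "set_borel_measurable borel {0..} rho_b"
    and rho_locbdd: "\<forall>T\<ge>0. \<exists>M. \<forall>\<eta>\<in>{0..T}. rho_b \<eta> \<le> M"
    and rho_pos: "\<forall>\<eta>\<ge>0. rho_b \<eta> > 0"
    and x_pos: "x > 0" and t_pos: "t > 0"
    and \<tau>1_nonneg: "\<tau>1 \<ge> 0"
    and \<tau>1_min: "\<forall>\<tau>\<ge>0. G u_b rho_b \<tau>1 x t \<le> G u_b rho_b \<tau> x t"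
    and on_seg: "(xb, tb) \<in> closed_segment (x, t) (0, \<tau>1)"
    and ne: "(xb, tb) \<noteq> (x, t)"
  shows "{\<tau>. \<tau> \<ge> 0 \<and> (\<forall>\<sigma>\<ge>0. G u_b rho_b \<tau> xb tb \<le> G u_b rho_b \<sigma> xb tb)} = {\<tau>1}"
proof -
  define F where "F = (\<lambda>a b \<eta>. (a - u_b \<eta> * (b - \<eta>)) * rho_b \<eta> * u_b \<eta>)"
  obtain B where B: "\<forall>\<eta>\<ge>0. u_b \<eta> \<le> B" using u_bdd by auto
  have um: "u_b \<in> borel_measurable (restrict_space borel {0..})"
    using u_meas unfolding set_borel_measurable_def
    by (subst borel_measurable_restrict_space_iff) auto
  have rm: "rho_b \<in> borel_measurable (restrict_space borel {0..})"
    using rho_meas unfolding set_borel_measurable_def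
    by (subst borel_measurable_restrict_space_iff) auto
  have Fm: "set_borel_measurable lborel A (F a b)" if "A \<in> sets borel" "A \<subseteq> {0..}" for A a b
  proof -
    have "F a b \<in> borel_measurable (restrict_space borel {0..})"
    proof -
      have idm: "(\<lambda>x::real. x) \<in> borel_measurable (restrict_space borel {0..})"
        by (rule measurable_restrict_space1) simp
      note [measurable] = um rm idm
      show ?thesis unfolding F_def by measurable
    qed
    then have "F a b \<in> borel_measurable (restrict_space borel A)"
      using measurable_restrict_mono that by blast
    then have "(\<lambda>x. indicator A x *\<^sub>R F a b x) \<in> borel_measurable borel"
      using that by (subst (asm) borel_measurable_restrict_space_iff) auto
    then show ?thesis unfolding set_borel_measurable_def by simp
  qed
  have Fi: "set_integrable lborel {0..\<tau>} (F a b)" if t0: "\<tau> \<ge> 0" for \<tau> a b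
  proof -
    obtain M where M: "\<forall>\<eta>\<in>{0..\<tau>}. rho_b \<eta> \<le> M" using rho_locbdd t0 by blast
    have bnd: "norm (F a b \<eta>) \<le> (\<bar>a\<bar> + B * (\<bar>b\<bar> + \<tau>)) * M * B" if "\<eta> \<in> {0..\<tau>}" for \<eta>
    proof -
      have u0: "0 < u_b \<eta>" "u_b \<eta> \<le> B" "0 < rho_b \<eta>" "rho_b \<eta> \<le> M"
        using that u_pos B rho_pos M by auto
      have "\<bar>b - \<eta>\<bar> \<le> \<bar>b\<bar> + \<tau>" using that by auto
      have "\<bar>a - u_b \<eta> * (b - \<eta>)\<bar> \<le> \<bar>a\<bar> + u_b \<eta> * \<bar>b - \<eta>\<bar>"
        using u0 by (simp add: abs_mult abs_triangle_ineq4 order_trans[OF abs_triangle_ineq4])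
      also have "\<dots> \<le> \<bar>a\<bar> + B * (\<bar>b\<bar> + \<tau>)"
        using u0 \<open>\<bar>b - \<eta>\<bar> \<le> \<bar>b\<bar> + \<tau>\<close> by (intro add_left_mono mult_mono) auto
      finally have h: "\<bar>a - u_b \<eta> * (b - \<eta>)\<bar> \<le> \<bar>a\<bar> + B * (\<bar>b\<bar> + \<tau>)" .
      have "norm (F a b \<eta>) = \<bar>a - u_b \<eta> * (b - \<eta>)\<bar> * rho_b \<eta> * u_b \<eta>"
        using u0 by (simp add: F_def abs_mult)
      also have "\<dots> \<le> (\<bar>a\<bar> + B * (\<bar>b\<bar> + \<tau>)) * M * B"
        using u0 h by (intro mult_mono) auto
      finally show ?thesis .
    qed
    have "integrable lborel (\<lambda>x. indicator {0..\<tau>} x *\<^sub>R F a b x)"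
    proof (rule integrableI_bounded_set[where A="{0..\<tau>}" and B="(\<bar>a\<bar> + B * (\<bar>b\<bar> + \<tau>)) * M * B"])
      show "(\<lambda>x. indicator {0..\<tau>} x *\<^sub>R F a b x) \<in> borel_measurable lborel"
        using Fm[of "{0..\<tau>}" a b] by (simp add: set_borel_measurable_def)
      show "AE x in lborel. x \<in> {0..\<tau>} \<longrightarrow> norm (indicator {0..\<tau>} x *\<^sub>R F a b x) \<le> (\<bar>a\<bar> + B * (\<bar>b\<bar> + \<tau>)) * M * B"
        using bnd by auto
    qed (use t0 in auto)
    then show ?thesis by (simp add: set_integrable_def)
  qed
  have Gdef: "G u_b rho_b \<tau> a b = (LINT \<eta>:{0..\<tau>}|lborel. F a b \<eta>)" for \<tau> a b
    by (simp add: G_def F_def)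
  obtain s where s: "0 \<le> s" "s \<le> 1" "(xb, tb) = (1 - s) *\<^sub>R (x, t) + s *\<^sub>R (0, \<tau>1)"
    using on_seg unfolding closed_segment_def by blast
  have xb: "xb = (1 - s) * x" and tb: "tb = (1 - s) * t + s * \<tau>1" using s(3) by auto
  have s0: "s > 0" using ne s xb tb by (cases "s = 0") auto
  define H where "H = (\<lambda>\<tau>. G u_b rho_b \<tau> 0 \<tau>1)"
  have decomp: "G u_b rho_b \<tau> xb tb = (1 - s) * G u_b rho_b \<tau> x t + s * H \<tau>" if "\<tau> \<ge> 0" for \<tau>
  proof -
    have "F xb tb = (\<lambda>\<eta>. (1 - s) * F x t \<eta> + s * F 0 \<tau>1 \<eta>)"
      by (rule ext) (simp add: F_def xb tb algebra_simps)
    then show ?thesis unfolding Gdef H_def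
      using Fi[OF that] by (simp add: set_integral_add)
  qed
  have Feq: "F 0 \<tau>1 \<eta> = (u_b \<eta> * u_b \<eta> * rho_b \<eta>) * (\<eta> - \<tau>1)" for \<eta>
    by (simp add: F_def algebra_simps)
  have Fc: "u_b \<eta> * u_b \<eta> * rho_b \<eta> > 0" if "\<eta> \<ge> 0" for \<eta>
    using u_pos rho_pos that by simp
  have Hstrict: "H \<tau>1 < H \<tau>" if t0: "\<tau> \<ge> 0" "\<tau> \<noteq> \<tau>1" for \<tau>
  proof (cases "\<tau> > \<tau>1")
    case True
    have un: "{0..\<tau>} = {0..\<tau>1} \<union> {\<tau>1<..\<tau>}" using True \<tau>1_nonneg by auto
    have i2: "set_integrable lborel {\<tau>1<..\<tau>} (F 0 \<tau>1)"
      by (rule set_integrable_subset[OF Fi[OF that(1)]]) (use \<tau>1_nonneg in auto)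
    have "H \<tau> = H \<tau>1 + (LINT \<eta>:{\<tau>1<..\<tau>}|lborel. F 0 \<tau>1 \<eta>)"
      unfolding H_def Gdef un
      by (rule set_integral_Un) (auto intro: Fi[OF \<tau>1_nonneg] i2)
    moreover have "0 < (LINT \<eta>:{\<tau>1<..\<tau>}|lborel. F 0 \<tau>1 \<eta>)"
    proof (rule pos_lemma[OF True i2])
      show "\<forall>\<eta>\<in>{\<tau>1<..\<tau>}. F 0 \<tau>1 \<eta> \<ge> 0"
      proof
        fix \<eta> assume e: "\<eta> \<in> {\<tau>1<..\<tau>}"
        then have "\<eta> \<ge> 0" "\<eta> - \<tau>1 \<ge> 0" using \<tau>1_nonneg by auto
        then show "F 0 \<tau>1 \<eta> \<ge> 0" unfolding Feq
          using mult_nonneg_nonneg[OF less_imp_le[OF Fc[OF \<open>\<eta> \<ge> 0\<close>]]] by blast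
      qed
      show "\<forall>\<eta>\<in>{\<tau>1<..<\<tau>}. F 0 \<tau>1 \<eta> > 0"
      proof
        fix \<eta> assume e: "\<eta> \<in> {\<tau>1<..<\<tau>}"
        then have "\<eta> \<ge> 0" "\<eta> - \<tau>1 > 0" using \<tau>1_nonneg by auto
        then show "F 0 \<tau>1 \<eta> > 0" unfolding Feq
          using mult_pos_pos[OF Fc[OF \<open>\<eta> \<ge> 0\<close>]] by blast
      qed
    qed
    ultimately show ?thesis by simp
  next
    case False
    then have lt: "\<tau> < \<tau>1" using that by auto
    have un: "{0..\<tau>1} = {0..\<tau>} \<union> {\<tau><..\<tau>1}" using lt that by auto
    have i2: "set_integrable lborel {\<tau><..\<tau>1} (F 0 \<tau>1)"
      by (rule set_integrable_subset[OF Fi[OF \<tau>1_nonneg]]) (use that in auto)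
    have "H \<tau>1 = H \<tau> + (LINT \<eta>:{\<tau><..\<tau>1}|lborel. F 0 \<tau>1 \<eta>)"
      unfolding H_def Gdef un
      by (rule set_integral_Un) (auto intro: Fi[OF that(1)] i2)
    moreover have "0 < (LINT \<eta>:{\<tau><..\<tau>1}|lborel. - F 0 \<tau>1 \<eta>)"
    proof (rule pos_lemma[OF lt])
      show "set_integrable lborel {\<tau><..\<tau>1} (\<lambda>\<eta>. - F 0 \<tau>1 \<eta>)"
        using i2 unfolding set_integrable_def by simp
      show "\<forall>\<eta>\<in>{\<tau><..\<tau>1}. - F 0 \<tau>1 \<eta> \<ge> 0"
      proof
        fix \<eta> assume e: "\<eta> \<in> {\<tau><..\<tau>1}"
        then have "\<eta> \<ge> 0" "\<eta> - \<tau>1 \<le> 0" using t0 by auto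
        then have "F 0 \<tau>1 \<eta> \<le> 0" unfolding Feq
          using mult_nonneg_nonpos[OF less_imp_le[OF Fc[OF \<open>\<eta> \<ge> 0\<close>]]] by blast
        then show "- F 0 \<tau>1 \<eta> \<ge> 0" by linarith
      qed
      show "\<forall>\<eta>\<in>{\<tau><..<\<tau>1}. - F 0 \<tau>1 \<eta> > 0"
      proof
        fix \<eta> assume e: "\<eta> \<in> {\<tau><..<\<tau>1}"
        then have "\<eta> \<ge> 0" "\<eta> - \<tau>1 < 0" using t0 by auto
        then have "F 0 \<tau>1 \<eta> < 0" unfolding Feq
          using mult_pos_neg[OF Fc[OF \<open>\<eta> \<ge> 0\<close>]] by blast
        then show "- F 0 \<tau>1 \<eta> > 0" by linarith
      qed
    qed
    ultimately show ?thesis using set_integral_uminus[OF i2] by simp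
  qed
  have Hmin: "H \<tau>1 \<le> H \<tau>" if "\<tau> \<ge> 0" for \<tau>
    using Hstrict[OF that] by (cases "\<tau> = \<tau>1") auto
  show ?thesis
  proof (intro set_eqI iffI)
    fix \<tau> assume "\<tau> \<in> {\<tau>. \<tau> \<ge> 0 \<and> (\<forall>\<sigma>\<ge>0. G u_b rho_b \<tau> xb tb \<le> G u_b rho_b \<sigma> xb tb)}"
    then have t0: "\<tau> \<ge> 0" and mn: "G u_b rho_b \<tau> xb tb \<le> G u_b rho_b \<tau>1 xb tb"
      using \<tau>1_nonneg by auto
    show "\<tau> \<in> {\<tau>1}"
    proof (rule ccontr)
      assume "\<tau> \<notin> {\<tau>1}"
      then have "H \<tau>1 < H \<tau>" using Hstrict t0 by auto
      then have "s * H \<tau>1 < s * H \<tau>" using s0 by simp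
      moreover have "(1 - s) * G u_b rho_b \<tau>1 x t \<le> (1 - s) * G u_b rho_b \<tau> x t"
        using \<tau>1_min t0 s by (intro mult_left_mono) auto
      ultimately show False using mn decomp[OF t0] decomp[OF \<tau>1_nonneg] by simp
    qed
  next
    fix \<tau> assume "\<tau> \<in> {\<tau>1}"
    then have [simp]: "\<tau> = \<tau>1" by simp
    have "G u_b rho_b \<tau>1 xb tb \<le> G u_b rho_b \<sigma> xb tb" if "\<sigma> \<ge> 0" for \<sigma>
    proof -
      have "s * H \<tau>1 \<le> s * H \<sigma>" using s0 Hmin[OF that] by simp
      moreover have "(1 - s) * G u_b rho_b \<tau>1 x t \<le> (1 - s) * G u_b rho_b \<sigma> x t"
        using \<tau>1_min that s by (intro mult_left_mono) auto
      ultimately show ?thesis using decomp[OF that] decomp[OF \<tau>1_nonneg] by simp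
    qed
    then show "\<tau> \<in> {\<tau>. \<tau> \<ge> 0 \<and> (\<forall>\<sigma>\<ge>0. G u_b rho_b \<tau> xb tb \<le> G u_b rho_b \<sigma> xb tb)}"
      using \<tau>1_nonneg by auto
  qed
qed

end
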